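(* $$\big\|\mathrm{Cov}(\hat{\mathcal{I}}_1(\theta))\big\|_F\le\frac1N\,\Big\|\frac{\partial h_L}{\partial\theta}\Big\|_F^4\,\big\|\mathcal{K}(t)-\mathcal{I}(h_L)\otimes\mathcal{I}(h_L)\big\|_F.$$
   Context: Setup. Fix an input $x\in\mathbb{R}^{n_0}$ and integers $L\ge1$, $n_1,\dots,n_L\ge1$. Network. The parameters are $\theta=(W_0,\dots,W_{L-1})$, with $W_l\in\mathbb{R}^{n_{l+1}\times(n_l+1)}$, viewed as a vector in $\mathbb{R}^{\dim\theta}$. Let $\sigma$ be differentiable and applied entrywise. Set $h_0=x$ and $\bar h_l=(h_l^\top,1)^\top$. For $1\le l\le L-1$ let $h_l=\sigma(W_{l-1}\bar h_{l-1})$, and let $h_L=W_{L-1}\bar h_{L-1}\in\mathbb{R}^{n_L}$. Exponential family. The model is $p(y\mid x,\theta)=\exp(t(y)^\top h_L-F(h_L))$ with respect to a base measure $\nu$, where $t(y)\in\mathbb{R}^{n_L}$ and $F(h)=\log\int\exp(t(y)^\top h)\,d\nu(y)$. Assume $h_L$ lies in the interior of the natural parameter space. Write $\eta=\nabla F(h_L)=\mathbb{E}[t(y)]$ and $\mathcal{I}(h_L)=\nabla^2F(h_L)=\mathrm{Cov}(t(y))$, with $y\sim p(y\mid x,\theta)$. Estimator. Let $\ell=\log p(y\mid x,\theta)$. With $N$ i.i.d. samples $y_i\sim p(y\mid x,\theta)$ and $\ell_i=\log p(y_i\mid x,\theta)$, let $\hat{\mathcal{I}}_1(\theta)=\frac1N\sum_i\frac{\partial\ell_i}{\partial\theta}\frac{\partial\ell_i}{\partial\theta^\top}$.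 Notation. $\mathrm{Cov}(\hat{\mathcal{I}}_1(\theta))$ is the 4-tensor with entries $\mathrm{Cov}(\hat{\mathcal{I}}_1^{ij},\hat{\mathcal{I}}_1^{kl})$. $\mathcal{K}_{abcd}(t)=\mathbb{E}[(t_a-\eta_a)(t_b-\eta_b)(t_c-\eta_c)(t_d-\eta_d)]$. $(\mathcal{I}(h_L)\otimes\mathcal{I}(h_L))_{abcd}=\mathcal{I}_{ab}(h_L)\mathcal{I}_{cd}(h_L)$. $\frac{\partial h_L}{\partial\theta}$ is the $n_L\times\dim\theta$ Jacobian. $\|\cdot\|_F$ is the square root of the sum of squared entries of a tensor. *)

theory Defs
  imports "HOL-Probability.Probability"
begin

text \<open>Parameters: theta (l,i,j) is entry (i,j) of W_l, for l < L, i < n (l+1), j \<le> n l;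
  column j = n l is the bias column.  Vectors are nat-indexed with explicit bounds.\<close>

type_synonym param = "nat \<times> nat \<times> nat \<Rightarrow> real"

definition param_idx :: "nat \<Rightarrow> (nat \<Rightarrow> nat) \<Rightarrow> (nat \<times> nat \<times> nat) set" where
  "param_idx L n = {(l,i,j). l < L \<and> i < n (Suc l) \<and> j \<le> n l}"

definition preact :: "(nat \<Rightarrow> nat) \<Rightarrow> param \<Rightarrow> nat \<Rightarrow> (nat \<Rightarrow> real) \<Rightarrow> nat \<Rightarrow> real" where
  "preact n \<theta> l h i = (\<Sum>j\<le>n l. \<theta> (l,i,j) * (if j < n l then h j else 1))"

fun hidden :: "(real \<Rightarrow> real) \<Rightarrow> (nat \<Rightarrow> nat) \<Rightarrow> (nat \<Rightarrow> real) \<Rightarrow> param \<Rightarrow> nat \<Rightarrow> nat \<Rightarrow> real" where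
  "hidden \<sigma> n x \<theta> 0 = x"
| "hidden \<sigma> n x \<theta> (Suc l) = (\<lambda>i. \<sigma> (preact n \<theta> l (hidden \<sigma> n x \<theta> l) i))"

definition net_out :: "(real \<Rightarrow> real) \<Rightarrow> (nat \<Rightarrow> nat) \<Rightarrow> nat \<Rightarrow> (nat \<Rightarrow> real) \<Rightarrow> param \<Rightarrow> nat \<Rightarrow> real" where
  "net_out \<sigma> n L x \<theta> = preact n \<theta> (L - 1) (hidden \<sigma> n x \<theta> (L - 1))"

definition pderiv_param :: "(param \<Rightarrow> real) \<Rightarrow> param \<Rightarrow> nat \<times> nat \<times> nat \<Rightarrow> real" where
  "pderiv_param f \<theta> p = deriv (\<lambda>s. f (\<theta>(p := \<theta> p + s))) 0"

definition logpart :: "'y measure \<Rightarrow> ('y \<Rightarrow> nat \<Rightarrow> real) \<Rightarrow> nat \<Rightarrow> (nat \<Rightarrow> real) \<Rightarrow> real" where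
  "logpart \<nu> t m h = ln (\<integral>y. exp (\<Sum>a<m. t y a * h a) \<partial>\<nu>)"

definition nat_param_space :: "'y measure \<Rightarrow> ('y \<Rightarrow> nat \<Rightarrow> real) \<Rightarrow> nat \<Rightarrow> (nat \<Rightarrow> real) set" where
  "nat_param_space \<nu> t m = {h. 0 < (\<integral>\<^sup>+y. ennreal (exp (\<Sum>a<m. t y a * h a)) \<partial>\<nu>)
                               \<and> (\<integral>\<^sup>+y. ennreal (exp (\<Sum>a<m. t y a * h a)) \<partial>\<nu>) < \<infinity>}"

definition in_interior_nps :: "'y measure \<Rightarrow> ('y \<Rightarrow> nat \<Rightarrow> real) \<Rightarrow> nat \<Rightarrow> (nat \<Rightarrow> real) \<Rightarrow> bool" where
  "in_interior_nps \<nu> t m h \<longleftrightarrow> (\<exists>e>0. \<forall>h'. (\<Sum>a<m. (h' a - h a)\<^sup>2) < e\<^sup>2 \<longrightarrow> h' \<in> nat_param_space \<nu> t m)"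

definition loglik :: "'y measure \<Rightarrow> ('y \<Rightarrow> nat \<Rightarrow> real) \<Rightarrow> (real \<Rightarrow> real) \<Rightarrow> (nat \<Rightarrow> nat) \<Rightarrow> nat
    \<Rightarrow> (nat \<Rightarrow> real) \<Rightarrow> param \<Rightarrow> 'y \<Rightarrow> real" where
  "loglik \<nu> t \<sigma> n L x \<theta> y =
     (\<Sum>a<n L. t y a * net_out \<sigma> n L x \<theta> a) - logpart \<nu> t (n L) (net_out \<sigma> n L x \<theta>)"

definition model :: "'y measure \<Rightarrow> ('y \<Rightarrow> nat \<Rightarrow> real) \<Rightarrow> (real \<Rightarrow> real) \<Rightarrow> (nat \<Rightarrow> nat) \<Rightarrow> nat
    \<Rightarrow> (nat \<Rightarrow> real) \<Rightarrow> param \<Rightarrow> 'y measure" where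
  "model \<nu> t \<sigma> n L x \<theta> = density \<nu> (\<lambda>y. ennreal (exp (loglik \<nu> t \<sigma> n L x \<theta> y)))"

definition score :: "'y measure \<Rightarrow> ('y \<Rightarrow> nat \<Rightarrow> real) \<Rightarrow> (real \<Rightarrow> real) \<Rightarrow> (nat \<Rightarrow> nat) \<Rightarrow> nat
    \<Rightarrow> (nat \<Rightarrow> real) \<Rightarrow> param \<Rightarrow> 'y \<Rightarrow> nat \<times> nat \<times> nat \<Rightarrow> real" where
  "score \<nu> t \<sigma> n L x \<theta> y p = pderiv_param (\<lambda>\<theta>'. loglik \<nu> t \<sigma> n L x \<theta>' y) \<theta> p"

definition emp_fisher :: "'y measure \<Rightarrow> ('y \<Rightarrow> nat \<Rightarrow> real) \<Rightarrow> (real \<Rightarrow> real) \<Rightarrow> (nat \<Rightarrow> nat) \<Rightarrow> nat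
    \<Rightarrow> (nat \<Rightarrow> real) \<Rightarrow> param \<Rightarrow> nat \<Rightarrow> (nat \<Rightarrow> 'y) \<Rightarrow> nat \<times> nat \<times> nat \<Rightarrow> nat \<times> nat \<times> nat \<Rightarrow> real" where
  "emp_fisher \<nu> t \<sigma> n L x \<theta> N ys p q =
     (1 / real N) * (\<Sum>i<N. score \<nu> t \<sigma> n L x \<theta> (ys i) p * score \<nu> t \<sigma> n L x \<theta> (ys i) q)"

definition covar :: "'a measure \<Rightarrow> ('a \<Rightarrow> real) \<Rightarrow> ('a \<Rightarrow> real) \<Rightarrow> real" where
  "covar M X Y = (\<integral>w. X w * Y w \<partial>M) - (\<integral>w. X w \<partial>M) * (\<integral>w. Y w \<partial>M)"

text \<open>eta = E[t], Fisher I = Cov(t), 4th central moment K\<close>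
definition mean_t :: "'y measure \<Rightarrow> ('y \<Rightarrow> nat \<Rightarrow> real) \<Rightarrow> nat \<Rightarrow> real" where
  "mean_t M t a = (\<integral>y. t y a \<partial>M)"

definition fisher_h :: "'y measure \<Rightarrow> ('y \<Rightarrow> nat \<Rightarrow> real) \<Rightarrow> nat \<Rightarrow> nat \<Rightarrow> real" where
  "fisher_h M t a b = (\<integral>y. (t y a - mean_t M t a) * (t y b - mean_t M t b) \<partial>M)"

definition kurt_t :: "'y measure \<Rightarrow> ('y \<Rightarrow> nat \<Rightarrow> real) \<Rightarrow> nat \<Rightarrow> nat \<Rightarrow> nat \<Rightarrow> nat \<Rightarrow> real" where
  "kurt_t M t a b c d = (\<integral>y. (t y a - mean_t M t a) * (t y b - mean_t M t b)
                            * (t y c - mean_t M t c) * (t y d - mean_t M t d) \<partial>M)"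

end

theory Submission
  imports Defs
begin



lemma sum4: "(\<Sum>a\<in>A. \<Sum>b\<in>B. \<Sum>c\<in>C. \<Sum>d\<in>D. f a b c d) = (\<Sum>(a,b,c,d)\<in>A\<times>B\<times>C\<times>D. f a b c d)"
  by (simp add: sum.cartesian_product split_def)

lemma frob:
  fixes J :: "nat \<Rightarrow> 'p \<Rightarrow> real" and T :: "nat \<Rightarrow> nat \<Rightarrow> nat \<Rightarrow> nat \<Rightarrow> real"
  assumes "finite P"
  shows "(\<Sum>p\<in>P. \<Sum>q\<in>P. \<Sum>r\<in>P. \<Sum>s\<in>P. (\<Sum>a<m. \<Sum>b<m. \<Sum>c<m. \<Sum>d<m. J a p * J b q * J c r * J d s * T a b c d)\<^sup>2)
    \<le> (\<Sum>a<m. \<Sum>p\<in>P. (J a p)\<^sup>2) ^ 4 * (\<Sum>a<m. \<Sum>b<m. \<Sum>c<m. \<Sum>d<m. (T a b c d)\<^sup>2)"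
proof -
  let ?Q = "{..<m}\<times>{..<m}\<times>{..<m}\<times>{..<m}"
  let ?W = "\<lambda>p q r s (a,b,c,d). J a p * J b q * J c r * J d s"
  let ?T = "\<lambda>(a,b,c,d). T a b c d"
  let ?TT = "(\<Sum>a<m. \<Sum>b<m. \<Sum>c<m. \<Sum>d<m. (T a b c d)\<^sup>2)"
  have TT: "?TT = (\<Sum>x\<in>?Q. (?T x)\<^sup>2)" by (simp add: sum4 split_def)
  have "(\<Sum>p\<in>P. \<Sum>q\<in>P. \<Sum>r\<in>P. \<Sum>s\<in>P. (\<Sum>a<m. \<Sum>b<m. \<Sum>c<m. \<Sum>d<m. J a p * J b q * J c r * J d s * T a b c d)\<^sup>2)
     = (\<Sum>p\<in>P. \<Sum>q\<in>P. \<Sum>r\<in>P. \<Sum>s\<in>P. (\<Sum>x\<in>?Q. ?W p q r s x * ?T x)\<^sup>2)"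
    by (simp add: sum4 split_def)
  also have "\<dots> \<le> (\<Sum>p\<in>P. \<Sum>q\<in>P. \<Sum>r\<in>P. \<Sum>s\<in>P. (\<Sum>x\<in>?Q. (?W p q r s x)\<^sup>2) * ?TT)"
    unfolding TT by (intro sum_mono Cauchy_Schwarz_ineq_sum)
  also have "\<dots> = (\<Sum>p\<in>P. \<Sum>q\<in>P. \<Sum>r\<in>P. \<Sum>s\<in>P. \<Sum>a<m. \<Sum>b<m. \<Sum>c<m. \<Sum>d<m.
        (J a p)\<^sup>2 * (J b q)\<^sup>2 * (J c r)\<^sup>2 * (J d s)\<^sup>2) * ?TT"
    by (simp add: sum4 split_def sum_distrib_right power_mult_distrib)
  also have "(\<Sum>p\<in>P. \<Sum>q\<in>P. \<Sum>r\<in>P. \<Sum>s\<in>P. \<Sum>a<m. \<Sum>b<m. \<Sum>c<m. \<Sum>d<m.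
        (J a p)\<^sup>2 * (J b q)\<^sup>2 * (J c r)\<^sup>2 * (J d s)\<^sup>2) = (\<Sum>a<m. \<Sum>p\<in>P. (J a p)\<^sup>2) ^ 4"
  proof -
    let ?A = "(\<Sum>a<m. \<Sum>p\<in>P. (J a p)\<^sup>2)"
    have A: "?A = (\<Sum>p\<in>P. \<Sum>a<m. (J a p)\<^sup>2)" by (rule sum.swap)
    define g where "g p = (\<Sum>a<m. (J a p)\<^sup>2)" for p
    have "\<And>p q r s. (\<Sum>a<m. \<Sum>b<m. \<Sum>c<m. \<Sum>d<m.
        (J a p)\<^sup>2 * (J b q)\<^sup>2 * (J c r)\<^sup>2 * (J d s)\<^sup>2) = g p * g q * g r * g s"
    proof -
      fix p q r s
      have e: "\<And>X p. g p * X = (\<Sum>a<m. (J a p)\<^sup>2 * X)" by (simp add: g_def sum_distrib_right)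
      show "(\<Sum>a<m. \<Sum>b<m. \<Sum>c<m. \<Sum>d<m.
        (J a p)\<^sup>2 * (J b q)\<^sup>2 * (J c r)\<^sup>2 * (J d s)\<^sup>2) = g p * g q * g r * g s"
      proof -
        have "g p * g q * g r * g s = g p * (g q * (g r * g s))" by (simp add: mult.assoc)
        also have "\<dots> = (\<Sum>a<m. (J a p)\<^sup>2 * (\<Sum>b<m. (J b q)\<^sup>2 * (\<Sum>c<m. (J c r)\<^sup>2 * (\<Sum>d<m. (J d s)\<^sup>2))))"
          by (simp only: e g_def[of s])
        also have "\<dots> = (\<Sum>a<m. \<Sum>b<m. \<Sum>c<m. \<Sum>d<m.
           (J a p)\<^sup>2 * (J b q)\<^sup>2 * (J c r)\<^sup>2 * (J d s)\<^sup>2)"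
          by (simp add: sum_distrib_left mult.assoc)
        finally show ?thesis by simp
      qed
    qed
    then have "(\<Sum>p\<in>P. \<Sum>q\<in>P. \<Sum>r\<in>P. \<Sum>s\<in>P. \<Sum>a<m. \<Sum>b<m. \<Sum>c<m. \<Sum>d<m.
        (J a p)\<^sup>2 * (J b q)\<^sup>2 * (J c r)\<^sup>2 * (J d s)\<^sup>2) = (\<Sum>p\<in>P. \<Sum>q\<in>P. \<Sum>r\<in>P. \<Sum>s\<in>P. g p * g q * g r * g s)"
      by simp
    also have "\<dots> = (\<Sum>p\<in>P. g p * (\<Sum>q\<in>P. g q * (\<Sum>r\<in>P. g r * (\<Sum>s\<in>P. g s))))"
      by (simp add: sum_distrib_left mult.assoc)
    also have "\<dots> = (\<Sum>p\<in>P. g p) ^ 4"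
      by (simp add: power4_eq_xxxx sum_distrib_right[symmetric] mult.assoc)
    finally show ?thesis unfolding A g_def .
  qed
  finally show ?thesis .
qed

lemma final_ineq:
  fixes J :: "nat \<Rightarrow> 'p \<Rightarrow> real" and T :: "nat \<Rightarrow> nat \<Rightarrow> nat \<Rightarrow> nat \<Rightarrow> real" and k :: real
  assumes "finite P" "k \<ge> 0"
  shows "sqrt (\<Sum>p\<in>P. \<Sum>q\<in>P. \<Sum>r\<in>P. \<Sum>s\<in>P. (k * (\<Sum>a<m. \<Sum>b<m. \<Sum>c<m. \<Sum>d<m. J a p * J b q * J c r * J d s * T a b c d))\<^sup>2)
    \<le> k * (sqrt (\<Sum>a<m. \<Sum>p\<in>P. (J a p)\<^sup>2)) ^ 4 * sqrt (\<Sum>a<m. \<Sum>b<m. \<Sum>c<m. \<Sum>d<m. (T a b c d)\<^sup>2)"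
proof -
  let ?X = "\<lambda>p q r s. (\<Sum>a<m. \<Sum>b<m. \<Sum>c<m. \<Sum>d<m. J a p * J b q * J c r * J d s * T a b c d)"
  let ?A = "(\<Sum>a<m. \<Sum>p\<in>P. (J a p)\<^sup>2)"
  let ?TT = "(\<Sum>a<m. \<Sum>b<m. \<Sum>c<m. \<Sum>d<m. (T a b c d)\<^sup>2)"
  have A0: "?A \<ge> 0" by (simp add: sum_nonneg)
  have T0: "?TT \<ge> 0" by (simp add: sum_nonneg)
  have "(\<Sum>p\<in>P. \<Sum>q\<in>P. \<Sum>r\<in>P. \<Sum>s\<in>P. (k * ?X p q r s)\<^sup>2)
      = k\<^sup>2 * (\<Sum>p\<in>P. \<Sum>q\<in>P. \<Sum>r\<in>P. \<Sum>s\<in>P. (?X p q r s)\<^sup>2)"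
  proof -
    have e: "\<And>p q r s. (k * ?X p q r s)\<^sup>2 = k\<^sup>2 * (?X p q r s)\<^sup>2" by (rule power_mult_distrib)
    show ?thesis by (simp only: e sum_distrib_left[symmetric])
  qed
  then have "sqrt (\<Sum>p\<in>P. \<Sum>q\<in>P. \<Sum>r\<in>P. \<Sum>s\<in>P. (k * ?X p q r s)\<^sup>2)
      = k * sqrt (\<Sum>p\<in>P. \<Sum>q\<in>P. \<Sum>r\<in>P. \<Sum>s\<in>P. (?X p q r s)\<^sup>2)"
    using assms(2) by (simp add: real_sqrt_mult)
  also have "\<dots> \<le> k * sqrt (?A ^ 4 * ?TT)"
    using frob[OF assms(1), where J=J and T=T and m=m] assms(2) by (intro mult_left_mono real_sqrt_le_mono) auto
  also have "\<dots> = k * (sqrt ?A) ^ 4 * sqrt ?TT"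
    using A0 by (simp add: real_sqrt_mult real_sqrt_power)
  finally show ?thesis .
qed

lemma prod_sum2:
  fixes P Q :: "_ \<Rightarrow> _ \<Rightarrow> real"
  shows "(\<Sum>a\<in>A. \<Sum>b\<in>B. P a b) * (\<Sum>c\<in>C. \<Sum>d\<in>D. Q c d) = (\<Sum>a\<in>A. \<Sum>b\<in>B. \<Sum>c\<in>C. \<Sum>d\<in>D. P a b * Q c d)"
  unfolding sum_distrib_right unfolding sum_distrib_left ..

lemma prod_sum1:
  fixes P Q :: "_ \<Rightarrow> real"
  shows "(\<Sum>a\<in>A. P a) * (\<Sum>b\<in>B. Q b) = (\<Sum>a\<in>A. \<Sum>b\<in>B. P a * Q b)"
  unfolding sum_distrib_right unfolding sum_distrib_left ..

lemma lin4:
  fixes u1 u2 u3 u4 C1 C2 C3 C4 b :: real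
  assumes "\<bar>u1\<bar> \<le> C1 * (1 + b)" "\<bar>u2\<bar> \<le> C2 * (1 + b)" "\<bar>u3\<bar> \<le> C3 * (1 + b)" "\<bar>u4\<bar> \<le> C4 * (1 + b)" "b \<ge> 0"
  shows "\<bar>u1 * u2 * u3 * u4\<bar> \<le> (C1 * C2 * C3 * C4) * (1 + b) ^ 4"
proof -
  have "\<bar>u1 * u2 * u3 * u4\<bar> = \<bar>u1\<bar> * \<bar>u2\<bar> * \<bar>u3\<bar> * \<bar>u4\<bar>" by (simp add: abs_mult)
  also have "\<dots> \<le> (C1 * (1 + b)) * (C2 * (1 + b)) * (C3 * (1 + b)) * (C4 * (1 + b))"
    using assms by (intro mult_mono) (auto intro: mult_nonneg_nonneg)
  also have "\<dots> = (C1 * C2 * C3 * C4) * (1 + b) ^ 4" by (simp add: power4_eq_xxxx mult_ac)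
  finally show ?thesis .
qed

lemma lin2:
  fixes u1 u2 C1 C2 b :: real
  assumes "\<bar>u1\<bar> \<le> C1 * (1 + b)" "\<bar>u2\<bar> \<le> C2 * (1 + b)" "b \<ge> 0"
  shows "\<bar>u1 * u2\<bar> \<le> (C1 * C2) * (1 + b) ^ 4"
proof -
  have C1: "C1 \<ge> 0" using assms(1,3) by (smt (verit) mult_nonneg_nonneg zero_le_mult_iff)
  have C2: "C2 \<ge> 0" using assms(2,3) by (smt (verit) mult_nonneg_nonneg zero_le_mult_iff)
  have "\<bar>u1 * u2\<bar> \<le> (C1 * (1 + b)) * (C2 * (1 + b))"
    unfolding abs_mult using assms by (intro mult_mono) auto
  also have "\<dots> = (C1 * C2) * (1 + b) ^ 2" by (simp add: power2_eq_square mult_ac)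
  also have "\<dots> \<le> (C1 * C2) * (1 + b) ^ 4"
    using C1 C2 assms(3) by (intro mult_left_mono power_increasing) auto
  finally show ?thesis .
qed



lemma pim_pair:
  fixes M :: "'y measure" and f g :: "'y \<Rightarrow> real" and N :: nat
  assumes M: "prob_space M" and f: "integrable M f" and g: "integrable M g"
    and fg: "integrable M (\<lambda>y. f y * g y)" and ij: "i < N" "j < N"
  shows "integrable (PiM {..<N} (\<lambda>_. M)) (\<lambda>x. f (x i) * g (x j))"
    and "(\<integral>x. f (x i) * g (x j) \<partial>PiM {..<N} (\<lambda>_. M))
         = (if i = j then (\<integral>y. f y * g y \<partial>M) else (\<integral>y. f y \<partial>M) * (\<integral>y. g y \<partial>M))"
proof -
  interpret product_sigma_finite "\<lambda>_::nat. M"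
    by (simp add: product_sigma_finite_def M prob_space_imp_sigma_finite)
  interpret prob_space M by fact
  define F where "F k = (if k = i \<and> i = j then (\<lambda>y. f y * g y) else if k = i then f else if k = j then g else (\<lambda>_. 1))" for k
  have intF: "\<And>k. k \<in> {..<N} \<Longrightarrow> integrable M (F k)" using f g fg by (auto simp: F_def)
  have eq: "(\<Prod>k\<in>{..<N}. F k (x k)) = f (x i) * g (x j)" for x
  proof (cases "i = j")
    case True
    have "(\<Prod>k\<in>{..<N}. F k (x k)) = (\<Prod>k\<in>{..<N}. if k = i then f (x i) * g (x i) else 1)"
      by (intro prod.cong) (auto simp: F_def True)
    also have "\<dots> = f (x i) * g (x i)" using ij by (simp add: prod.delta)
    finally show ?thesis using True by simp
  next
    case False
    have "(\<Prod>k\<in>{..<N}. F k (x k)) = (\<Prod>k\<in>{..<N}. (if k = i then f (x i) else 1) * (if k = j then g (x j) else 1))"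
      by (intro prod.cong) (auto simp: F_def False prob_space.prob_space[OF M])
    also have "\<dots> = f (x i) * g (x j)" using ij by (simp add: prod.distrib prod.delta)
    finally show ?thesis .
  qed
  show "integrable (PiM {..<N} (\<lambda>_. M)) (\<lambda>x. f (x i) * g (x j))"
    using product_integrable_prod[of "{..<N}" F, OF _ intF] by (simp add: eq)
  have "(\<integral>x. f (x i) * g (x j) \<partial>PiM {..<N} (\<lambda>_. M)) = (\<Prod>k\<in>{..<N}. integral\<^sup>L M (F k))"
    using product_integral_prod[of "{..<N}" F, OF _ intF] by (simp add: eq)
  also have "\<dots> = (if i = j then (\<integral>y. f y * g y \<partial>M) else (\<integral>y. f y \<partial>M) * (\<integral>y. g y \<partial>M))"
  proof (cases "i = j")
    case True
    have "(\<Prod>k\<in>{..<N}. integral\<^sup>L M (F k)) = (\<Prod>k\<in>{..<N}. if k = i then (\<integral>y. f y * g y \<partial>M) else 1)"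
      by (intro prod.cong) (auto simp: F_def True prob_space.prob_space[OF M])
    then show ?thesis using ij True by (simp add: prod.delta)
  next
    case False
    have "(\<Prod>k\<in>{..<N}. integral\<^sup>L M (F k)) = (\<Prod>k\<in>{..<N}. (if k = i then (\<integral>y. f y \<partial>M) else 1) * (if k = j then (\<integral>y. g y \<partial>M) else 1))"
      by (intro prod.cong) (auto simp: F_def False prob_space.prob_space[OF M])
    then show ?thesis using ij False by (simp add: prod.distrib prod.delta)
  qed
  finally show "(\<integral>x. f (x i) * g (x j) \<partial>PiM {..<N} (\<lambda>_. M))
         = (if i = j then (\<integral>y. f y * g y \<partial>M) else (\<integral>y. f y \<partial>M) * (\<integral>y. g y \<partial>M))" .
qed

lemma cov_iid:
  fixes M :: "'y measure" and f g :: "'y \<Rightarrow> real" and N :: nat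
  assumes M: "prob_space M" and f: "integrable M f" and g: "integrable M g"
    and fg: "integrable M (\<lambda>y. f y * g y)" and N: "N \<ge> 1"
  shows "covar (PiM {..<N} (\<lambda>_. M)) (\<lambda>ys. (1 / real N) * (\<Sum>i<N. f (ys i))) (\<lambda>ys. (1 / real N) * (\<Sum>i<N. g (ys i)))
     = (1 / real N) * ((\<integral>y. f y * g y \<partial>M) - (\<integral>y. f y \<partial>M) * (\<integral>y. g y \<partial>M))"
proof -
  let ?S = "PiM {..<N} (\<lambda>_. M)"
  let ?A = "(\<integral>y. f y * g y \<partial>M)" and ?F = "(\<integral>y. f y \<partial>M)" and ?G = "(\<integral>y. g y \<partial>M)"
  interpret S: prob_space ?S by (rule prob_space_PiM) (use M in auto)
  interpret prob_space M by fact
  have one: "integrable M (\<lambda>_. 1::real)" by simp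
  have oneI: "(\<integral>y. 1 \<partial>M) = (1::real)" by (simp add: prob_space)
  have intf: "\<And>i. i < N \<Longrightarrow> integrable ?S (\<lambda>x. f (x i))"
    using pim_pair(1)[OF M f one, of _ N] by (simp add: f)
  have Ef: "\<And>i. i < N \<Longrightarrow> (\<integral>x. f (x i) \<partial>?S) = ?F"
    using pim_pair(2)[OF M f one, of _ N] by (auto simp: f oneI split: if_splits)
  have intg: "\<And>i. i < N \<Longrightarrow> integrable ?S (\<lambda>x. g (x i))"
    using pim_pair(1)[OF M g one, of _ N] by (simp add: g)
  have Eg: "\<And>i. i < N \<Longrightarrow> (\<integral>x. g (x i) \<partial>?S) = ?G"
    using pim_pair(2)[OF M g one, of _ N] by (auto simp: g oneI split: if_splits)
  have intfg: "\<And>i j. i < N \<Longrightarrow> j < N \<Longrightarrow> integrable ?S (\<lambda>x. f (x i) * g (x j))"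
    using pim_pair(1)[OF M f g fg] by simp
  have Efg: "\<And>i j. i < N \<Longrightarrow> j < N \<Longrightarrow> (\<integral>x. f (x i) * g (x j) \<partial>?S) = (if i = j then ?A else ?F * ?G)"
    using pim_pair(2)[OF M f g fg] by simp
  have "(\<integral>x. (1 / real N) * (\<Sum>i<N. f (x i)) \<partial>?S) = (1 / real N) * (\<Sum>i<N. ?F)"
    using intf Ef by (simp add: integral_sum)
  also have "\<dots> = ?F" using N by simp
  finally have E1: "(\<integral>x. (1 / real N) * (\<Sum>i<N. f (x i)) \<partial>?S) = ?F" .
  have "(\<integral>x. (1 / real N) * (\<Sum>i<N. g (x i)) \<partial>?S) = (1 / real N) * (\<Sum>i<N. ?G)"
    using intg Eg by (simp add: integral_sum)
  also have "\<dots> = ?G" using N by simp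
  finally have E2: "(\<integral>x. (1 / real N) * (\<Sum>i<N. g (x i)) \<partial>?S) = ?G" .
  have "(\<integral>x. (1 / real N) * (\<Sum>i<N. f (x i)) * ((1 / real N) * (\<Sum>j<N. g (x j))) \<partial>?S)
      = (\<integral>x. (1 / real N)^2 * (\<Sum>i<N. \<Sum>j<N. f (x i) * g (x j)) \<partial>?S)"
    by (simp add: sum_product power2_eq_square algebra_simps)
  also have "\<dots> = (1 / real N)^2 * (\<Sum>i<N. \<Sum>j<N. (\<integral>x. f (x i) * g (x j) \<partial>?S))"
  proof -
    have i1: "\<And>i. i \<in> {..<N} \<Longrightarrow> integrable ?S (\<lambda>x. \<Sum>j<N. f (x i) * g (x j))"
      using intfg by (auto intro!: integrable_sum)
    have "(\<integral>x. (\<Sum>i<N. \<Sum>j<N. f (x i) * g (x j)) \<partial>?S) = (\<Sum>i<N. (\<integral>x. (\<Sum>j<N. f (x i) * g (x j)) \<partial>?S))"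
      by (rule Bochner_Integration.integral_sum[OF i1])
    also have "\<dots> = (\<Sum>i<N. \<Sum>j<N. (\<integral>x. f (x i) * g (x j) \<partial>?S))"
      using intfg by (intro sum.cong refl Bochner_Integration.integral_sum) auto
    finally show ?thesis by simp
  qed
  also have "\<dots> = (1 / real N)^2 * (\<Sum>i<N. \<Sum>j<N. ?F * ?G + (if i = j then ?A - ?F * ?G else 0))"
    using Efg by (intro arg_cong[where f="\<lambda>x. _ * x"] sum.cong) auto
  also have "\<dots> = (1 / real N)^2 * (\<Sum>i<N. real N * (?F * ?G) + (?A - ?F * ?G))"
    by (simp add: sum.distrib)
  also have "\<dots> = (1 / real N) * (?A - ?F * ?G) + ?F * ?G"
    using N by (simp add: power2_eq_square field_simps)
  finally show ?thesis unfolding covar_def E1 E2 by simp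
qed



lemma exp_sub_one_bound: "\<bar>exp (u::real) - 1\<bar> \<le> \<bar>u\<bar> * exp \<bar>u\<bar>"
proof (cases "u \<ge> 0")
  case True
  have "1 - u \<le> exp (-u)" using exp_ge_add_one_self[of "-u"] by simp
  then have "(1 - u) * exp u \<le> 1" by (simp add: exp_minus field_simps)
  then show ?thesis using True by (simp add: algebra_simps)
next
  case False
  have "1 + u \<le> exp u" by (rule exp_ge_add_one_self)
  note f1 = this
  have "1 \<le> exp (-u)" using False by simp
  then have f2: "-u \<le> -u * exp (-u)" using False by (simp add: mult_le_cancel_left1)
  have a1: "\<bar>exp u - 1\<bar> = 1 - exp u" using False by simp
  have a2: "\<bar>u\<bar> = -u" using False by simp
  show ?thesis unfolding a1 a2 using f1 f2 by linarith
qed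

lemma one_plus_le_exp: fixes d B :: real assumes "d > 0" "B \<ge> 0" shows "1 + B \<le> (1 + 1/d) * exp (d * B)"
proof -
  have "1 + d * B \<le> exp (d * B)" by (rule exp_ge_add_one_self)
  moreover have "1 + B \<le> (1 + 1/d) * (1 + d * B)" using assms by (simp add: field_simps)
  moreover have "0 \<le> 1 + 1/d" using assms by simp
  ultimately show ?thesis by (meson mult_left_mono order_trans)
qed

lemma exp_avg_le: fixes u :: "nat \<Rightarrow> real" assumes "m \<ge> 1"
  shows "exp ((\<Sum>a<m. u a) / m) \<le> (\<Sum>a<m. exp (u a))"
proof -
  let ?U = "u ` {..<m}"
  have ne: "?U \<noteq> {}" using assms by (auto simp: lessThan_empty_iff)
  obtain a0 where a0: "a0 < m" "u a0 = Max ?U" using Max_in[OF _ ne] by auto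
  have "(\<Sum>a<m. u a) \<le> (\<Sum>a<m. u a0)" using a0 by (intro sum_mono) auto
  then have "(\<Sum>a<m. u a) / m \<le> u a0" using assms by (simp add: field_simps)
  then have "exp ((\<Sum>a<m. u a) / m) \<le> exp (u a0)" by simp
  also have "\<dots> \<le> (\<Sum>a<m. exp (u a))" using a0 by (intro member_le_sum) auto
  finally show ?thesis .
qed

lemma dom_at:
  fixes s :: "real \<Rightarrow> 'a \<Rightarrow> real" and x0 :: real
  assumes sm: "\<And>r. s r \<in> borel_measurable M" and fm: "f \<in> borel_measurable M" and w: "integrable M w"
    and lim: "\<And>y. y \<in> space M \<Longrightarrow> ((\<lambda>r. s r y) \<longlongrightarrow> f y) (at x0)"
    and bd: "\<forall>\<^sub>F r in at x0. \<forall>y\<in>space M. \<bar>s r y\<bar> \<le> w y"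
  shows "((\<lambda>r. integral\<^sup>L M (s r)) \<longlongrightarrow> integral\<^sup>L M f) (at x0)"
  unfolding tendsto_at_iff_sequentially
proof (intro allI impI)
  fix X :: "nat \<Rightarrow> real" assume X: "\<forall>i. X i \<in> UNIV - {x0}" "X \<longlonglongrightarrow> x0"
  have fX: "filterlim X (at x0) sequentially"
    using X by (auto simp: filterlim_at)
  from filterlim_iff[THEN iffD1, OF fX, rule_format, OF bd]
  obtain N where N: "\<And>n. n \<ge> N \<Longrightarrow> \<forall>y\<in>space M. \<bar>s (X n) y\<bar> \<le> w y"
    by (auto simp: eventually_sequentially)
  have "(\<lambda>n. integral\<^sup>L M (s (X (n + N)))) \<longlonglongrightarrow> integral\<^sup>L M f"
  proof (rule integral_dominated_convergence[OF fm _ w])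
    show "\<And>i. s (X (i + N)) \<in> borel_measurable M" by (rule sm)
    show "AE y in M. (\<lambda>i. s (X (i + N)) y) \<longlonglongrightarrow> f y"
    proof (intro AE_I2)
      fix y assume y: "y \<in> space M"
      have "(\<lambda>i. s (X i) y) \<longlonglongrightarrow> f y"
        by (rule filterlim_compose[OF lim[OF y] fX])
      then show "(\<lambda>i. s (X (i + N)) y) \<longlonglongrightarrow> f y"
        by (rule LIMSEQ_ignore_initial_segment)
    qed
    show "\<And>i. AE y in M. norm (s (X (i + N)) y) \<le> w y"
      using N by (intro AE_I2) auto
  qed
  then show "((\<lambda>r. integral\<^sup>L M (s r)) \<circ> X) \<longlonglongrightarrow> integral\<^sup>L M f"
    unfolding comp_def by (rule LIMSEQ_offset)
qed

locale expfam =
  fixes \<nu> :: "'y measure" and t :: "'y \<Rightarrow> nat \<Rightarrow> real" and m :: nat and h :: "nat \<Rightarrow> real"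
  assumes meas: "\<forall>a<m. (\<lambda>y. t y a) \<in> borel_measurable \<nu>"
    and inter: "in_interior_nps \<nu> t m h"
    and mpos: "m \<ge> 1"
begin

definition E :: "(nat \<Rightarrow> real) \<Rightarrow> 'y \<Rightarrow> real" where
  "E h' y = exp (\<Sum>a<m. t y a * h' a)"

definition B :: "'y \<Rightarrow> real" where
  "B y = (\<Sum>a<m. \<bar>t y a\<bar>)"

lemma t_meas[measurable]: "a < m \<Longrightarrow> (\<lambda>y. t y a) \<in> borel_measurable \<nu>"
  using meas by auto

lemma lin_meas[measurable]: "(\<lambda>y. \<Sum>a<m. t y a * h' a) \<in> borel_measurable \<nu>"
  by (intro borel_measurable_sum borel_measurable_times t_meas) auto

lemma E_meas[measurable]: "E h' \<in> borel_measurable \<nu>"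
  unfolding E_def by measurable

lemma B_meas[measurable]: "B \<in> borel_measurable \<nu>"
  unfolding B_def by (intro borel_measurable_sum borel_measurable_abs t_meas) auto

lemma B_nonneg: "B y \<ge> 0" unfolding B_def by (simp add: sum_nonneg)

lemma E_pos: "E h' y > 0" unfolding E_def by simp

lemma ball_int: "\<exists>\<delta>>0. \<forall>h'. (\<Sum>a<m. (h' a - h a)\<^sup>2) < \<delta>\<^sup>2 \<longrightarrow> integrable \<nu> (E h')"
proof -
  obtain \<delta> where d: "\<delta> > 0" "\<And>h'. (\<Sum>a<m. (h' a - h a)\<^sup>2) < \<delta>\<^sup>2 \<Longrightarrow> h' \<in> nat_param_space \<nu> t m"
    using inter unfolding in_interior_nps_def by blast
  have "integrable \<nu> (E h')" if "(\<Sum>a<m. (h' a - h a)\<^sup>2) < \<delta>\<^sup>2" for h'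
  proof -
    have "(\<integral>\<^sup>+y. ennreal (exp (\<Sum>a<m. t y a * h' a)) \<partial>\<nu>) < \<infinity>"
      using d(2)[OF that] unfolding nat_param_space_def by auto
    then show ?thesis
      by (intro integrableI_bounded) (auto simp: E_def)
  qed
  with d(1) show ?thesis by blast
qed

lemma E_upd: "a < m \<Longrightarrow> E (h(a := h a + r)) y = E h y * exp (r * t y a)"
proof -
  assume a: "a < m"
  have "(\<Sum>a'<m. t y a' * (h(a := h a + r)) a') = (\<Sum>a'<m. t y a' * h a' + (if a' = a then r * t y a else 0))"
    by (intro sum.cong) (auto simp: algebra_simps)
  also have "\<dots> = (\<Sum>a'<m. t y a' * h a') + r * t y a" using a by (simp add: sum.distrib)
  finally show ?thesis by (simp add: E_def exp_add)
qed

lemma exp_moment: "\<exists>c>0. integrable \<nu> (\<lambda>y. E h y * exp (c * B y))"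
proof -
  obtain \<delta> where d: "\<delta> > 0" "\<And>h'. (\<Sum>a<m. (h' a - h a)\<^sup>2) < \<delta>\<^sup>2 \<Longrightarrow> integrable \<nu> (E h')"
    using ball_int by blast
  define r where "r = \<delta> / 2"
  have r: "r > 0" "r\<^sup>2 < \<delta>\<^sup>2" using d(1) by (auto simp: r_def power2_eq_square)
  have dist: "(\<Sum>a'<m. ((h(a := h a + s)) a' - h a')\<^sup>2) = s\<^sup>2" if "a < m" for a s
  proof -
    have "(\<Sum>a'<m. ((h(a := h a + s)) a' - h a')\<^sup>2) = (\<Sum>a'<m. if a' = a then s\<^sup>2 else 0)"
      by (intro sum.cong) auto
    then show ?thesis using that by simp
  qed
  have intp: "integrable \<nu> (\<lambda>y. E h y * exp (r * t y a))" if "a < m" for a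
  proof -
    have e: "E (h(a := h a + r)) = (\<lambda>y. E h y * exp (r * t y a))" using E_upd[OF that] by auto
    show ?thesis using d(2)[of "h(a := h a + r)"] dist[OF that, of r] r unfolding e by simp
  qed
  have intm: "integrable \<nu> (\<lambda>y. E h y * exp (- r * t y a))" if "a < m" for a
  proof -
    have e: "E (h(a := h a + - r)) = (\<lambda>y. E h y * exp (- r * t y a))" by (rule ext) (rule E_upd[OF that])
    show ?thesis using d(2)[of "h(a := h a + - r)"] dist[OF that, of "-r"] r unfolding e by simp
  qed
  define c where "c = r / m"
  have c: "c > 0" using r mpos by (simp add: c_def)
  have "integrable \<nu> (\<lambda>y. E h y * exp (c * B y))"
  proof (rule Bochner_Integration.integrable_bound)
    show "integrable \<nu> (\<lambda>y. \<Sum>a<m. E h y * exp (r * t y a) + E h y * exp (- r * t y a))"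
      using intp intm by (intro Bochner_Integration.integrable_sum Bochner_Integration.integrable_add) auto
    show "(\<lambda>y. E h y * exp (c * B y)) \<in> borel_measurable \<nu>" by measurable
    show "AE y in \<nu>. norm (E h y * exp (c * B y)) \<le> norm (\<Sum>a<m. E h y * exp (r * t y a) + E h y * exp (- r * t y a))"
    proof (intro AE_I2)
      fix y
      have "c * B y = (\<Sum>a<m. r * \<bar>t y a\<bar>) / m" by (simp add: c_def B_def sum_distrib_left sum_divide_distrib)
      then have "exp (c * B y) \<le> (\<Sum>a<m. exp (r * \<bar>t y a\<bar>))" using exp_avg_le[OF mpos] by simp
      also have "\<dots> \<le> (\<Sum>a<m. exp (r * t y a) + exp (- r * t y a))"
        by (intro sum_mono) (auto simp: abs_if add_increasing add_increasing2)
      finally have "E h y * exp (c * B y) \<le> E h y * (\<Sum>a<m. exp (r * t y a) + exp (- r * t y a))"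
        using E_pos[of h y] by simp
      then show "norm (E h y * exp (c * B y)) \<le> norm (\<Sum>a<m. E h y * exp (r * t y a) + E h y * exp (- r * t y a))"
        using E_pos[of h y] by (simp add: sum_distrib_left distrib_left sum_nonneg add_nonneg_nonneg)
    qed
  qed
  with c show ?thesis by blast
qed


definition Z :: "(nat \<Rightarrow> real) \<Rightarrow> real" where
  "Z h' = integral\<^sup>L \<nu> (E h')"

lemma E_cong: "(\<And>a. a < m \<Longrightarrow> h1 a = h2 a) \<Longrightarrow> E h1 = E h2"
  unfolding E_def by (intro ext arg_cong[where f=exp] sum.cong) auto

lemma int_h: "integrable \<nu> (E h)"
proof -
  obtain \<delta> where d: "\<delta> > 0" "\<And>h'. (\<Sum>a<m. (h' a - h a)\<^sup>2) < \<delta>\<^sup>2 \<Longrightarrow> integrable \<nu> (E h')"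
    using ball_int by blast
  show ?thesis using d by simp
qed

lemma Z_pos: "Z h > 0"
proof -
  have "0 < (\<integral>\<^sup>+y. ennreal (exp (\<Sum>a<m. t y a * h a)) \<partial>\<nu>)"
    using inter unfolding in_interior_nps_def nat_param_space_def by force
  also have "(\<integral>\<^sup>+y. ennreal (exp (\<Sum>a<m. t y a * h a)) \<partial>\<nu>) = ennreal (Z h)"
    unfolding Z_def using int_h by (subst nn_integral_eq_integral[symmetric]) (auto simp: E_def)
  finally show ?thesis by simp
qed

lemma poly_int:
  assumes pm: "\<phi> \<in> borel_measurable \<nu>" and pb: "\<And>y. \<bar>\<phi> y\<bar> \<le> C * (1 + B y) ^ 4"
  shows "integrable \<nu> (\<lambda>y. E h y * \<phi> y)"
proof -
  obtain c where c: "c > 0" "integrable \<nu> (\<lambda>y. E h y * exp (c * B y))" using exp_moment by blast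
  define K where "K = 1 + 1 / (c / 4)"
  have K: "K \<ge> 0" using c by (simp add: K_def)
  show ?thesis
  proof (rule Bochner_Integration.integrable_bound)
    show "integrable \<nu> (\<lambda>y. (C * K ^ 4) * (E h y * exp (c * B y)))"
      using c by simp
    show "(\<lambda>y. E h y * \<phi> y) \<in> borel_measurable \<nu>" using pm by measurable
    show "AE y in \<nu>. norm (E h y * \<phi> y) \<le> norm ((C * K ^ 4) * (E h y * exp (c * B y)))"
    proof (intro AE_I2)
      fix y
      have X: "(1 + B y) ^ 4 > 0" using B_nonneg[of y] by simp
      have C: "C \<ge> 0"
      proof (rule ccontr)
        assume "\<not> C \<ge> 0"
        then have "C * (1 + B y) ^ 4 < 0" using X by (simp add: mult_neg_pos)
        then show False using pb[of y] by linarith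
      qed
      have "1 + B y \<le> K * exp (c / 4 * B y)" unfolding K_def
        using one_plus_le_exp[of "c/4" "B y"] c B_nonneg by simp
      then have "(1 + B y) ^ 4 \<le> (K * exp (c / 4 * B y)) ^ 4"
        using B_nonneg[of y] by (intro power_mono) auto
      also have "\<dots> = K ^ 4 * exp (c * B y)"
        by (simp add: power_mult_distrib exp_of_nat_mult[symmetric])
      finally have "\<bar>\<phi> y\<bar> \<le> C * (K ^ 4 * exp (c * B y))"
        using pb[of y] C by (meson mult_left_mono order_trans)
      then have "E h y * \<bar>\<phi> y\<bar> \<le> E h y * (C * (K ^ 4 * exp (c * B y)))"
        using E_pos[of h y] by (intro mult_left_mono) auto
      then show "norm (E h y * \<phi> y) \<le> norm ((C * K ^ 4) * (E h y * exp (c * B y)))"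
        using E_pos[of h y] C K by (simp add: abs_mult mult_ac)
    qed
  qed
qed


lemma Z_deriv:
  fixes G :: "real \<Rightarrow> nat \<Rightarrow> real" and J :: "nat \<Rightarrow> real"
  assumes G0: "\<And>a. a < m \<Longrightarrow> G 0 a = h a"
    and GD: "\<And>a. a < m \<Longrightarrow> ((\<lambda>s. G s a) has_real_derivative J a) (at 0)"
  shows "((\<lambda>s. Z (G s)) has_real_derivative (\<integral>y. E h y * (\<Sum>a<m. t y a * J a) \<partial>\<nu>)) (at 0)"
proof -
  obtain \<delta> where d: "\<delta> > 0" "\<And>h'. (\<Sum>a<m. (h' a - h a)\<^sup>2) < \<delta>\<^sup>2 \<Longrightarrow> integrable \<nu> (E h')"
    using ball_int by blast
  obtain c where c: "c > 0" "integrable \<nu> (\<lambda>y. E h y * exp (c * B y))" using exp_moment by blast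
  define K where "K = 1 + (\<Sum>a<m. \<bar>J a\<bar>)"
  have K: "K \<ge> 1" by (simp add: K_def sum_nonneg)
  define \<rho> where "\<rho> = min \<delta> (c/2) / (K * (real m + 1))"
  have \<rho>: "\<rho> > 0" using d c K by (simp add: \<rho>_def)
  have EG0: "E (G 0) = E h" by (rule E_cong) (simp add: G0)
  have nz: "\<forall>\<^sub>F s in at (0::real). s \<noteq> 0" by (simp add: eventually_at_filter)
  have ev1: "\<forall>\<^sub>F s in at 0. \<forall>a\<in>{..<m}. \<bar>G s a - h a\<bar> \<le> K * \<bar>s\<bar>"
  proof (rule eventually_ball_finite, simp, intro ballI)
    fix a assume "a \<in> {..<m}"
    then have a: "a < m" by simp
    have "((\<lambda>s. (G s a - G 0 a) / (s - 0)) \<longlongrightarrow> J a) (at 0)"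
      using GD[OF a] unfolding has_field_derivative_iff by simp
    then have "\<forall>\<^sub>F s in at 0. dist ((G s a - G 0 a) / (s - 0)) (J a) < 1"
      by (simp add: tendsto_iff)
    with nz show "\<forall>\<^sub>F s in at 0. \<bar>G s a - h a\<bar> \<le> K * \<bar>s\<bar>"
    proof (eventually_elim)
      case (elim s)
      have "\<bar>J a\<bar> \<le> (\<Sum>a<m. \<bar>J a\<bar>)" using a by (intro member_le_sum) auto
      then have JK: "\<bar>J a\<bar> + 1 \<le> K" by (simp add: K_def)
      have "\<bar>(G s a - h a) / s\<bar> \<le> \<bar>J a\<bar> + 1" using elim G0[OF a] by (simp add: dist_real_def)
      then have "\<bar>(G s a - h a) / s\<bar> \<le> K" using JK by linarith
      then show ?case using elim(1) by (simp add: abs_divide divide_le_eq mult.commute)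
    qed
  qed
  have ev2: "\<forall>\<^sub>F s in at (0::real). \<bar>s\<bar> < \<rho>"
    unfolding eventually_at using \<rho> by (auto simp: dist_real_def)
  have ev: "\<forall>\<^sub>F s in at 0. s \<noteq> 0 \<and> (\<forall>a\<in>{..<m}. \<bar>G s a - h a\<bar> \<le> K * \<bar>s\<bar>) \<and> \<bar>s\<bar> < \<rho>"
    using nz ev1 ev2 by eventually_elim auto
  define w where "w y = K * (1 + 1 / (c / 2)) * (E h y * exp (c * B y))" for y
  have w: "integrable \<nu> w" unfolding w_def using c by simp
  have key: "integrable \<nu> (E (G s)) \<and> (\<forall>y. \<bar>(E (G s) y - E h y) / s\<bar> \<le> w y)"
    if s: "s \<noteq> 0" "\<forall>a\<in>{..<m}. \<bar>G s a - h a\<bar> \<le> K * \<bar>s\<bar>" "\<bar>s\<bar> < \<rho>" for s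
  proof
    have Ks: "K * \<bar>s\<bar> < min \<delta> (c/2) / (real m + 1)"
    proof -
      have "K * \<bar>s\<bar> < K * \<rho>" using s(3) K by simp
      also have "K * \<rho> = min \<delta> (c/2) / (real m + 1)" using K by (simp add: \<rho>_def)
      finally show ?thesis .
    qed
    then have Ksm: "(real m + 1) * (K * \<bar>s\<bar>) < min \<delta> (c/2)"
      by (simp add: pos_less_divide_eq mult.commute)
    then have Ks1: "(real m + 1) * (K * \<bar>s\<bar>) < \<delta>" by simp
    have q0: "0 \<le> K * \<bar>s\<bar>" using K by simp
    have "K * \<bar>s\<bar> \<le> (real m + 1) * (K * \<bar>s\<bar>)" using q0 by (simp add: mult_le_cancel_right1)
    then have Ks2: "K * \<bar>s\<bar> \<le> c / 2" using Ksm by simp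
    have "(\<Sum>a<m. (G s a - h a)\<^sup>2) \<le> (\<Sum>a<m. (K * \<bar>s\<bar>)\<^sup>2)"
      using s(2) q0 by (intro sum_mono) (metis abs_le_square_iff abs_of_nonneg lessThan_iff)
    also have "\<dots> = real m * (K * \<bar>s\<bar>)\<^sup>2" by simp
    also have "\<dots> \<le> (real m + 1)\<^sup>2 * (K * \<bar>s\<bar>)\<^sup>2"
      by (rule mult_right_mono[OF _ zero_le_power2]) (simp add: power2_eq_square algebra_simps)
    also have "\<dots> = ((real m + 1) * (K * \<bar>s\<bar>))\<^sup>2"
      by (simp add: power_mult_distrib)
    also have "\<dots> < \<delta>\<^sup>2"
      using Ks1 K by (intro power_strict_mono) auto
    finally show "integrable \<nu> (E (G s))" by (rule d(2))
    show "\<forall>y. \<bar>(E (G s) y - E h y) / s\<bar> \<le> w y"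
    proof
      fix y
      define u where "u = (\<Sum>a<m. t y a * (G s a - h a))"
      have EGs: "E (G s) y = E h y * exp u"
        by (simp add: E_def u_def exp_add[symmetric] sum.distrib[symmetric] algebra_simps)
      have ub: "\<bar>u\<bar> \<le> K * \<bar>s\<bar> * B y"
      proof -
        have "\<bar>u\<bar> \<le> (\<Sum>a<m. \<bar>t y a\<bar> * (K * \<bar>s\<bar>))"
          unfolding u_def using s(2)
          by (intro order_trans[OF sum_abs] sum_mono) (auto simp: abs_mult intro: mult_left_mono)
        then show ?thesis by (simp add: B_def sum_distrib_left mult_ac)
      qed
      have ub2: "\<bar>u\<bar> \<le> c / 2 * B y"
        using ub Ks2 B_nonneg[of y] by (meson mult_right_mono order_trans)
      have "\<bar>(E (G s) y - E h y) / s\<bar> = E h y * (\<bar>exp u - 1\<bar> / \<bar>s\<bar>)"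
      proof -
        have "E (G s) y - E h y = E h y * (exp u - 1)" by (simp add: EGs algebra_simps)
        then show ?thesis using E_pos[of h y] by (simp add: abs_divide abs_mult)
      qed
      also have "\<dots> \<le> E h y * (\<bar>u\<bar> * exp \<bar>u\<bar> / \<bar>s\<bar>)"
        using E_pos[of h y] s(1) exp_sub_one_bound[of u]
        by (intro mult_left_mono divide_right_mono) auto
      also have "\<dots> \<le> E h y * (K * B y * exp (c / 2 * B y))"
      proof -
        have "\<bar>u\<bar> / \<bar>s\<bar> \<le> K * B y" using ub s(1) by (simp add: divide_le_eq mult_ac)
        moreover have "exp \<bar>u\<bar> \<le> exp (c / 2 * B y)" using ub2 by simp
        ultimately have "\<bar>u\<bar> / \<bar>s\<bar> * exp \<bar>u\<bar> \<le> K * B y * exp (c / 2 * B y)"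
          using K B_nonneg[of y] by (intro mult_mono) auto
        then show ?thesis using E_pos[of h y] by (intro mult_left_mono) (auto simp: mult_ac)
      qed
      also have "\<dots> \<le> w y"
      proof -
        have "B y \<le> 1 + B y" by simp
        also have "\<dots> \<le> (1 + 1 / (c / 2)) * exp (c / 2 * B y)"
          using one_plus_le_exp[of "c/2" "B y"] c B_nonneg by simp
        finally have "B y * exp (c / 2 * B y) \<le> (1 + 1 / (c / 2)) * exp (c / 2 * B y) * exp (c / 2 * B y)"
          by (simp add: mult_right_mono)
        also have "\<dots> = (1 + 1 / (c / 2)) * exp (c * B y)"
          by (simp add: exp_add[symmetric] mult.assoc)
        finally have "K * (B y * exp (c / 2 * B y)) \<le> K * ((1 + 1 / (c / 2)) * exp (c * B y))"
          using K by (intro mult_left_mono) auto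
        then have "E h y * (K * (B y * exp (c / 2 * B y))) \<le> E h y * (K * ((1 + 1 / (c / 2)) * exp (c * B y)))"
          by (rule mult_left_mono) (use E_pos[of h y] in auto)
        then show ?thesis unfolding w_def by (simp add: mult_ac)
      qed
      finally show "\<bar>(E (G s) y - E h y) / s\<bar> \<le> w y" .
    qed
  qed
  have lim: "((\<lambda>r. integral\<^sup>L \<nu> (\<lambda>y. (E (G r) y - E h y) / r)) \<longlongrightarrow>
      (\<integral>y. E h y * (\<Sum>a<m. t y a * J a) \<partial>\<nu>)) (at 0)"
  proof (rule dom_at[OF _ _ w])
    show "\<And>r. (\<lambda>y. (E (G r) y - E h y) / r) \<in> borel_measurable \<nu>" by measurable
    show "(\<lambda>y. E h y * (\<Sum>a<m. t y a * J a)) \<in> borel_measurable \<nu>"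
      by (intro borel_measurable_times E_meas borel_measurable_sum) auto
    show "((\<lambda>r. (E (G r) y - E h y) / r) \<longlongrightarrow> E h y * (\<Sum>a<m. t y a * J a)) (at 0)" for y
    proof -
      have "((\<lambda>s. exp (\<Sum>a<m. t y a * G s a)) has_real_derivative
          exp (\<Sum>a<m. t y a * G 0 a) * (\<Sum>a<m. t y a * J a)) (at 0)"
        by (auto intro!: derivative_eq_intros GD simp: mult.commute)
      then have "((\<lambda>s. E (G s) y) has_real_derivative E h y * (\<Sum>a<m. t y a * J a)) (at 0)"
        using EG0 unfolding E_def by (metis (no_types, lifting) E_def)
      then have "((\<lambda>r. (E (G r) y - E (G 0) y) / (r - 0)) \<longlongrightarrow> E h y * (\<Sum>a<m. t y a * J a)) (at 0)"
        unfolding has_field_derivative_iff by simp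
      then show ?thesis using EG0 by simp
    qed
    show "\<forall>\<^sub>F r in at 0. \<forall>y\<in>space \<nu>. \<bar>(E (G r) y - E h y) / r\<bar> \<le> w y"
      using ev by eventually_elim (use key in blast)
  qed
  have "((\<lambda>r. (Z (G r) - Z (G 0)) / (r - 0)) \<longlongrightarrow> (\<integral>y. E h y * (\<Sum>a<m. t y a * J a) \<partial>\<nu>)) (at 0)"
  proof (rule Lim_transform_eventually[OF lim])
    show "\<forall>\<^sub>F r in at 0. integral\<^sup>L \<nu> (\<lambda>y. (E (G r) y - E h y) / r) = (Z (G r) - Z (G 0)) / (r - 0)"
      using ev
    proof eventually_elim
      case (elim r)
      then have "integrable \<nu> (E (G r))" using key by blast
      then show ?case using int_h EG0 unfolding Z_def by (simp add: integral_diff)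
    qed
  qed
  then show ?thesis unfolding has_field_derivative_iff by simp
qed

end



lemma upd_diff: "(\<lambda>s. (\<theta>(p := \<theta> p + s)) q) differentiable (at s0)"
  by (cases "q = p") (auto intro!: differentiable_add differentiable_const differentiable_ident)

lemma preact_diff:
  assumes H: "\<And>j. (\<lambda>s. H s j) differentiable (at s0)"
  shows "(\<lambda>s. preact n (\<theta>(p := \<theta> p + s)) l (H s) i) differentiable (at s0)"
  unfolding preact_def
proof (intro differentiable_sum ballI, simp)
  fix j
  show "(\<lambda>s. (\<theta>(p := \<theta> p + s)) (l, i, j) * (if j < n l then H s j else 1)) differentiable (at s0)"
  proof (rule differentiable_mult)
    show "(\<lambda>s. (\<theta>(p := \<theta> p + s)) (l, i, j)) differentiable at s0" by (rule upd_diff)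
    show "(\<lambda>s. if j < n l then H s j else 1) differentiable at s0"
      using H by (cases "j < n l") (auto intro: differentiable_const)
  qed
qed

lemma hidden_diff:
  assumes \<sigma>: "\<forall>z. \<sigma> differentiable (at z)"
  shows "(\<lambda>s. hidden \<sigma> n x (\<theta>(p := \<theta> p + s)) l i) differentiable (at s0)"
proof (induction l arbitrary: i)
  case 0
  then show ?case by (simp add: differentiable_const)
next
  case (Suc l)
  have P: "(\<lambda>s. preact n (\<theta>(p := \<theta> p + s)) l (hidden \<sigma> n x (\<theta>(p := \<theta> p + s)) l) i) differentiable (at s0)"
    by (rule preact_diff) (rule Suc.IH)
  have "\<sigma> \<circ> (\<lambda>s. preact n (\<theta>(p := \<theta> p + s)) l (hidden \<sigma> n x (\<theta>(p := \<theta> p + s)) l) i) differentiable (at s0)"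
    using differentiable_chain_at[OF P] \<sigma> by blast
  then show ?case by (simp only: comp_def hidden.simps)
qed

lemma net_out_diff:
  assumes \<sigma>: "\<forall>z. \<sigma> differentiable (at z)"
  shows "(\<lambda>s. net_out \<sigma> n L x (\<theta>(p := \<theta> p + s)) a) differentiable (at s0)"
  unfolding net_out_def by (rule preact_diff) (rule hidden_diff[OF \<sigma>])

lemma net_out_DERIV:
  assumes \<sigma>: "\<forall>z. \<sigma> differentiable (at z)"
  shows "((\<lambda>s. net_out \<sigma> n L x (\<theta>(p := \<theta> p + s)) a) has_real_derivative
           pderiv_param (\<lambda>\<theta>'. net_out \<sigma> n L x \<theta>' a) \<theta> p) (at 0)"
  unfolding pderiv_param_def using net_out_diff[OF \<sigma>] DERIV_deriv_iff_real_differentiable by blast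




lemma integral_sum2:
  fixes f :: "_ \<Rightarrow> _ \<Rightarrow> 'y \<Rightarrow> real"
  assumes "finite A" "finite B" "\<And>a b. a \<in> A \<Longrightarrow> b \<in> B \<Longrightarrow> integrable M (f a b)"
  shows "(\<integral>y. (\<Sum>a\<in>A. \<Sum>b\<in>B. f a b y) \<partial>M) = (\<Sum>a\<in>A. \<Sum>b\<in>B. \<integral>y. f a b y \<partial>M)"
    and "integrable M (\<lambda>y. \<Sum>a\<in>A. \<Sum>b\<in>B. f a b y)"
  using assms by (simp_all add: Bochner_Integration.integral_sum Bochner_Integration.integrable_sum)

lemma integral_sum4:
  fixes f :: "_ \<Rightarrow> _ \<Rightarrow> _ \<Rightarrow> _ \<Rightarrow> 'y \<Rightarrow> real"
  assumes "finite A" "finite B" "finite C" "finite D"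
    "\<And>a b c d. a \<in> A \<Longrightarrow> b \<in> B \<Longrightarrow> c \<in> C \<Longrightarrow> d \<in> D \<Longrightarrow> integrable M (f a b c d)"
  shows "(\<integral>y. (\<Sum>a\<in>A. \<Sum>b\<in>B. \<Sum>c\<in>C. \<Sum>d\<in>D. f a b c d y) \<partial>M) = (\<Sum>a\<in>A. \<Sum>b\<in>B. \<Sum>c\<in>C. \<Sum>d\<in>D. \<integral>y. f a b c d y \<partial>M)"
  using assms by (simp add: Bochner_Integration.integral_sum Bochner_Integration.integrable_sum)

lemma moment_expand:
  fixes X :: "nat \<Rightarrow> 'y \<Rightarrow> real" and J :: "nat \<Rightarrow> 'p \<Rightarrow> real"
  assumes I4: "\<And>a b c d. a < m \<Longrightarrow> b < m \<Longrightarrow> c < m \<Longrightarrow> d < m \<Longrightarrow> integrable M (\<lambda>y. X a y * X b y * X c y * X d y)"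
    and I2: "\<And>a b. a < m \<Longrightarrow> b < m \<Longrightarrow> integrable M (\<lambda>y. X a y * X b y)"
  defines "sc \<equiv> \<lambda>p y. (\<Sum>a<m. X a y * J a p)"
  shows "(\<integral>y. (sc p y * sc q y) * (sc r y * sc s y) \<partial>M) - (\<integral>y. sc p y * sc q y \<partial>M) * (\<integral>y. sc r y * sc s y \<partial>M)
    = (\<Sum>a<m. \<Sum>b<m. \<Sum>c<m. \<Sum>d<m. J a p * J b q * J c r * J d s *
        ((\<integral>y. X a y * X b y * X c y * X d y \<partial>M) - (\<integral>y. X a y * X b y \<partial>M) * (\<integral>y. X c y * X d y \<partial>M)))"
proof -
  have pq: "sc p y * sc q y = (\<Sum>a<m. \<Sum>b<m. (J a p * J b q) * (X a y * X b y))" for p q y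
    unfolding sc_def prod_sum1 by (simp add: mult_ac)
  have E2: "(\<integral>y. sc p y * sc q y \<partial>M) = (\<Sum>a<m. \<Sum>b<m. J a p * J b q * (\<integral>y. X a y * X b y \<partial>M))" for p q
    unfolding pq using I2 by (subst integral_sum2(1)) auto
  have "(\<integral>y. (sc p y * sc q y) * (sc r y * sc s y) \<partial>M)
     = (\<integral>y. (\<Sum>a<m. \<Sum>b<m. \<Sum>c<m. \<Sum>d<m. (J a p * J b q * J c r * J d s) * (X a y * X b y * X c y * X d y)) \<partial>M)"
    unfolding pq prod_sum2 by (simp add: mult_ac)
  also have "\<dots> = (\<Sum>a<m. \<Sum>b<m. \<Sum>c<m. \<Sum>d<m. (J a p * J b q * J c r * J d s) * (\<integral>y. X a y * X b y * X c y * X d y \<partial>M))"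
    using I4 by (subst integral_sum4) auto
  finally have E4: "(\<integral>y. (sc p y * sc q y) * (sc r y * sc s y) \<partial>M) = \<dots>" .
  have E22: "(\<integral>y. sc p y * sc q y \<partial>M) * (\<integral>y. sc r y * sc s y \<partial>M) =
     (\<Sum>a<m. \<Sum>b<m. \<Sum>c<m. \<Sum>d<m. (J a p * J b q * (\<integral>y. X a y * X b y \<partial>M)) * (J c r * J d s * (\<integral>y. X c y * X d y \<partial>M)))"
    unfolding E2 prod_sum2 ..
  show ?thesis unfolding E4 E22
    by (simp add: sum_subtractf[symmetric] algebra_simps)
qed




theorem mainTheorem6:
  fixes x :: "nat \<Rightarrow> real" and L N :: nat and n :: "nat \<Rightarrow> nat"
    and \<sigma> :: "real \<Rightarrow> real" and \<theta> :: param
    and \<nu> :: "'y measure" and t :: "'y \<Rightarrow> nat \<Rightarrow> real"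
  assumes "L \<ge> 1"
    and "\<forall>l\<in>{1..L}. n l \<ge> 1"
    and "\<forall>z. \<sigma> differentiable (at z)"
    and "\<forall>a<n L. (\<lambda>y. t y a) \<in> borel_measurable \<nu>"
    and "in_interior_nps \<nu> t (n L) (net_out \<sigma> n L x \<theta>)"
    and "N \<ge> 1"
  shows
   "(let P = param_idx L n;
         M = model \<nu> t \<sigma> n L x \<theta>;
         S = PiM {..<N} (\<lambda>_. M);
         Ihat = emp_fisher \<nu> t \<sigma> n L x \<theta> N;
         J = (\<lambda>a p. pderiv_param (\<lambda>\<theta>'. net_out \<sigma> n L x \<theta>' a) \<theta> p);
         m = n L
     in sqrt (\<Sum>p\<in>P. \<Sum>q\<in>P. \<Sum>r\<in>P. \<Sum>s\<in>P.
                (covar S (\<lambda>ys. Ihat ys p q) (\<lambda>ys. Ihat ys r s))\<^sup>2)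
        \<le> (1 / real N) * (sqrt (\<Sum>a<m. \<Sum>p\<in>P. (J a p)\<^sup>2)) ^ 4
          * sqrt (\<Sum>a<m. \<Sum>b<m. \<Sum>c<m. \<Sum>d<m.
                    (kurt_t M t a b c d - fisher_h M t a b * fisher_h M t c d)\<^sup>2))"
proof -
  define P where "P = param_idx L n"
  define M where "M = model \<nu> t \<sigma> n L x \<theta>"
  define S where "S = PiM {..<N} (\<lambda>_. M)"
  define Ihat where "Ihat = emp_fisher \<nu> t \<sigma> n L x \<theta> N"
  define J where "J = (\<lambda>a p. pderiv_param (\<lambda>\<theta>'. net_out \<sigma> n L x \<theta>' a) \<theta> p)"
  define h where "h = net_out \<sigma> n L x \<theta>"
  have m1: "n L \<ge> 1" using assms(1,2) by auto
  interpret ef: expfam \<nu> t "n L" h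
    using assms(4,5) m1 by unfold_locales (auto simp: h_def)
  define Zh where "Zh = ef.Z h"
  have Zpos: "Zh > 0" unfolding Zh_def by (rule ef.Z_pos)
  define wd where "wd y = ef.E h y / Zh" for y
  have wd_meas[measurable]: "wd \<in> borel_measurable \<nu>" unfolding wd_def by measurable
  have wd_pos: "wd y > 0" for y using Zpos ef.E_pos[of h y] by (simp add: wd_def)
  have logpart_eq: "\<And>h'. logpart \<nu> t (n L) h' = ln (ef.Z h')"
    by (simp add: logpart_def ef.Z_def ef.E_def[abs_def])
  have M_eq: "M = density \<nu> (\<lambda>y. ennreal (wd y))"
  proof -
    have "exp (loglik \<nu> t \<sigma> n L x \<theta> y) = wd y" for y
      unfolding loglik_def logpart_eq using Zpos
      by (simp add: exp_diff wd_def ef.E_def h_def[symmetric] Zh_def[symmetric])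
    then show ?thesis unfolding M_def model_def by simp
  qed
  have int_wd: "integrable \<nu> wd"
    unfolding wd_def using ef.int_h by simp
  have int_wd_int: "integral\<^sup>L \<nu> wd = 1"
    unfolding wd_def using Zpos by (simp add: Zh_def ef.Z_def)
  have probM: "prob_space M"
  proof (rule prob_spaceI)
    have "emeasure M (space M) = (\<integral>\<^sup>+y. ennreal (wd y) \<partial>\<nu>)"
    proof -
      have "emeasure M (space M) = (\<integral>\<^sup>+y. ennreal (wd y) * indicator (space \<nu>) y \<partial>\<nu>)"
        unfolding M_eq by (subst emeasure_density) auto
      also have "\<dots> = (\<integral>\<^sup>+y. ennreal (wd y) \<partial>\<nu>)"
        by (rule nn_integral_cong) simp
      finally show ?thesis .
    qed
    also have "\<dots> = ennreal (integral\<^sup>L \<nu> wd)"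
      using int_wd wd_pos by (intro nn_integral_eq_integral) (auto intro: less_imp_le)
    finally show "emeasure M (space M) = 1" using int_wd_int by simp
  qed
  have intM: "integrable M \<phi>" if pm: "\<phi> \<in> borel_measurable \<nu>" and pb: "\<And>y. \<bar>\<phi> y\<bar> \<le> C * (1 + ef.B y) ^ 4" for \<phi> C
  proof -
    have "integrable \<nu> (\<lambda>y. (1 / Zh) * (ef.E h y * \<phi> y))"
      using ef.poly_int[OF pm pb] by simp
    then have "integrable \<nu> (\<lambda>y. wd y *\<^sub>R \<phi> y)" by (simp add: wd_def mult_ac)
    then show ?thesis unfolding M_eq
      using wd_pos by (subst integrable_density) (auto intro: less_imp_le pm)
  qed
  have EM: "integral\<^sup>L M \<phi> = (\<integral>y. wd y * \<phi> y \<partial>\<nu>)" if pm: "\<phi> \<in> borel_measurable \<nu>" for \<phi>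
    unfolding M_eq using wd_pos pm by (subst integral_density) (auto intro: less_imp_le)
  define \<eta> where "\<eta> a = mean_t M t a" for a
  have tB: "\<bar>t y a\<bar> \<le> ef.B y" if "a < n L" for y a
    unfolding ef.B_def using that by (intro member_le_sum) auto
  have score_eq: "score \<nu> t \<sigma> n L x \<theta> y p = (\<Sum>a<n L. (t y a - \<eta> a) * J a p)" for y p
  proof -
    define G where "G s = net_out \<sigma> n L x (\<theta>(p := \<theta> p + s))" for s
    have G0: "G 0 = h" by (simp add: G_def h_def)
    have GD: "((\<lambda>s. G s a) has_real_derivative J a p) (at 0)" for a
      using net_out_DERIV[OF assms(3)] by (simp add: G_def J_def)
    define D where "D = (\<integral>y. ef.E h y * (\<Sum>a<n L. t y a * J a p) \<partial>\<nu>)"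
    have ZD: "((\<lambda>s. ef.Z (G s)) has_real_derivative D) (at 0)"
      unfolding D_def by (rule ef.Z_deriv) (auto simp: G0 GD)
    have lnD: "((\<lambda>s. ln (ef.Z (G s))) has_real_derivative inverse Zh * D) (at 0)"
      using DERIV_chain2[OF DERIV_ln ZD] Zpos by (simp add: G0 Zh_def)
    have LD: "((\<lambda>s. loglik \<nu> t \<sigma> n L x (\<theta>(p := \<theta> p + s)) y) has_real_derivative
        (\<Sum>a<n L. t y a * J a p) - inverse Zh * D) (at 0)"
    proof -
      have eq: "loglik \<nu> t \<sigma> n L x (\<theta>(p := \<theta> p + s)) y = (\<Sum>a<n L. t y a * G s a) - ln (ef.Z (G s))" for s
        unfolding loglik_def logpart_eq G_def ..
      show ?thesis unfolding eq
        by (intro DERIV_diff lnD DERIV_sum DERIV_cmult GD)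
    qed
    have sc: "score \<nu> t \<sigma> n L x \<theta> y p = (\<Sum>a<n L. t y a * J a p) - inverse Zh * D"
      unfolding score_def pderiv_param_def by (rule DERIV_imp_deriv[OF LD])
    have ta_int: "integrable \<nu> (\<lambda>y. ef.E h y * t y a)" if "a < n L" for a
    proof (rule ef.poly_int)
      show "(\<lambda>y. t y a) \<in> borel_measurable \<nu>" using that by (rule ef.t_meas)
      fix y
      have "(1 + ef.B y) ^ 1 \<le> (1 + ef.B y) ^ 4"
        by (rule power_increasing) (use ef.B_nonneg[of y] in auto)
      then have "ef.B y \<le> 1 * (1 + ef.B y) ^ 4" by simp
      then show "\<bar>t y a\<bar> \<le> 1 * (1 + ef.B y) ^ 4" using tB[OF that, of y] by linarith
    qed
    have "inverse Zh * D = (\<integral>y. inverse Zh * (ef.E h y * (\<Sum>a<n L. t y a * J a p)) \<partial>\<nu>)"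
      unfolding D_def by (rule integral_mult_right_zero[symmetric])
    also have "\<dots> = (\<integral>y. (\<Sum>a<n L. J a p * (wd y * t y a)) \<partial>\<nu>)"
      by (intro Bochner_Integration.integral_cong refl) (simp add: wd_def sum_distrib_left divide_inverse mult_ac)
    also have "\<dots> = (\<Sum>a<n L. J a p * (\<integral>y. wd y * t y a \<partial>\<nu>))"
    proof (subst Bochner_Integration.integral_sum)
      show "\<And>a. a \<in> {..<n L} \<Longrightarrow> integrable \<nu> (\<lambda>y. J a p * (wd y * t y a))"
        using ta_int by (auto simp: wd_def mult_ac)
    qed simp
    also have "\<dots> = (\<Sum>a<n L. J a p * \<eta> a)"
      by (intro sum.cong refl) (simp add: \<eta>_def mean_t_def EM ef.t_meas)
    finally have "inverse Zh * D = (\<Sum>a<n L. J a p * \<eta> a)" .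
    then show ?thesis unfolding sc by (simp add: sum_subtractf[symmetric] algebra_simps)
  qed
  define X where "X a y = t y a - \<eta> a" for a y
  define sc where "sc p y = (\<Sum>a<n L. X a y * J a p)" for p y
  have score_sc: "score \<nu> t \<sigma> n L x \<theta> y p = sc p y" for y p
    unfolding score_eq sc_def X_def ..
  have X_meas[measurable]: "a < n L \<Longrightarrow> X a \<in> borel_measurable \<nu>" for a
    unfolding X_def[abs_def] by (intro borel_measurable_diff ef.t_meas) auto
  have sc_meas[measurable]: "sc p \<in> borel_measurable \<nu>" for p
    unfolding sc_def[abs_def] by (intro borel_measurable_sum borel_measurable_times X_meas) auto
  have X_lin: "\<bar>X a y\<bar> \<le> (1 + \<bar>\<eta> a\<bar>) * (1 + ef.B y)" if "a < n L" for a y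
  proof -
    have "\<bar>X a y\<bar> \<le> ef.B y + \<bar>\<eta> a\<bar>" using tB[OF that, of y] by (simp add: X_def)
    also have "\<dots> \<le> (1 + \<bar>\<eta> a\<bar>) * (1 + ef.B y)"
      using ef.B_nonneg[of y] by (simp add: algebra_simps)
    finally show ?thesis .
  qed
  have sc_lin: "\<bar>sc p y\<bar> \<le> (\<Sum>a<n L. (1 + \<bar>\<eta> a\<bar>) * \<bar>J a p\<bar>) * (1 + ef.B y)" for p y
  proof -
    have "\<bar>sc p y\<bar> \<le> (\<Sum>a<n L. \<bar>X a y * J a p\<bar>)" unfolding sc_def by (rule sum_abs)
    also have "\<dots> \<le> (\<Sum>a<n L. ((1 + \<bar>\<eta> a\<bar>) * \<bar>J a p\<bar>) * (1 + ef.B y))"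
    proof (intro sum_mono)
      fix a assume "a \<in> {..<n L}"
      then have "\<bar>X a y\<bar> \<le> (1 + \<bar>\<eta> a\<bar>) * (1 + ef.B y)" using X_lin by auto
      then have "\<bar>X a y\<bar> * \<bar>J a p\<bar> \<le> (1 + \<bar>\<eta> a\<bar>) * (1 + ef.B y) * \<bar>J a p\<bar>"
        by (intro mult_right_mono) auto
      then show "\<bar>X a y * J a p\<bar> \<le> ((1 + \<bar>\<eta> a\<bar>) * \<bar>J a p\<bar>) * (1 + ef.B y)"
        by (simp add: abs_mult mult_ac)
    qed
    also have "\<dots> = (\<Sum>a<n L. (1 + \<bar>\<eta> a\<bar>) * \<bar>J a p\<bar>) * (1 + ef.B y)"
      by (simp add: sum_distrib_right)
    finally show ?thesis .
  qed
  have I4: "integrable M (\<lambda>y. X a y * X b y * X c y * X d y)" if "a < n L" "b < n L" "c < n L" "d < n L" for a b c d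
  proof (rule intM[where C="(1 + \<bar>\<eta> a\<bar>) * (1 + \<bar>\<eta> b\<bar>) * (1 + \<bar>\<eta> c\<bar>) * (1 + \<bar>\<eta> d\<bar>)"])
    show "(\<lambda>y. X a y * X b y * X c y * X d y) \<in> borel_measurable \<nu>"
      using that by (intro borel_measurable_times X_meas)
    show "\<bar>X a y * X b y * X c y * X d y\<bar> \<le> (1 + \<bar>\<eta> a\<bar>) * (1 + \<bar>\<eta> b\<bar>) * (1 + \<bar>\<eta> c\<bar>) * (1 + \<bar>\<eta> d\<bar>) * (1 + ef.B y) ^ 4" for y
      by (rule lin4[OF X_lin X_lin X_lin X_lin ef.B_nonneg]) (use that in auto)
  qed
  have I2: "integrable M (\<lambda>y. X a y * X b y)" if "a < n L" "b < n L" for a b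
  proof (rule intM[where C="(1 + \<bar>\<eta> a\<bar>) * (1 + \<bar>\<eta> b\<bar>)"])
    show "(\<lambda>y. X a y * X b y) \<in> borel_measurable \<nu>"
      using that by (intro borel_measurable_times X_meas)
    show "\<bar>X a y * X b y\<bar> \<le> (1 + \<bar>\<eta> a\<bar>) * (1 + \<bar>\<eta> b\<bar>) * (1 + ef.B y) ^ 4" for y
      by (rule lin2[OF X_lin X_lin ef.B_nonneg]) (use that in auto)
  qed
  define Cs where "Cs p = (\<Sum>a<n L. (1 + \<bar>\<eta> a\<bar>) * \<bar>J a p\<bar>)" for p
  have sc_lin': "\<bar>sc p y\<bar> \<le> Cs p * (1 + ef.B y)" for p y unfolding Cs_def by (rule sc_lin)
  have Isc2: "integrable M (\<lambda>y. sc p y * sc q y)" for p q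
  proof (rule intM[where C="Cs p * Cs q"])
    show "(\<lambda>y. sc p y * sc q y) \<in> borel_measurable \<nu>" by measurable
    show "\<bar>sc p y * sc q y\<bar> \<le> Cs p * Cs q * (1 + ef.B y) ^ 4" for y
      by (rule lin2[OF sc_lin' sc_lin' ef.B_nonneg])
  qed
  have Isc4: "integrable M (\<lambda>y. (sc p y * sc q y) * (sc r y * sc s y))" for p q r s
  proof -
    have "integrable M (\<lambda>y. sc p y * sc q y * sc r y * sc s y)"
    proof (rule intM[where C="Cs p * Cs q * Cs r * Cs s"])
      show "(\<lambda>y. sc p y * sc q y * sc r y * sc s y) \<in> borel_measurable \<nu>" by measurable
      show "\<bar>sc p y * sc q y * sc r y * sc s y\<bar> \<le> Cs p * Cs q * Cs r * Cs s * (1 + ef.B y) ^ 4" for y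
        by (rule lin4[OF sc_lin' sc_lin' sc_lin' sc_lin' ef.B_nonneg])
    qed
    then show ?thesis by (simp add: mult_ac)
  qed
  have cov: "covar S (\<lambda>ys. Ihat ys p q) (\<lambda>ys. Ihat ys r s) =
      (1 / real N) * (\<Sum>a<n L. \<Sum>b<n L. \<Sum>c<n L. \<Sum>d<n L. J a p * J b q * J c r * J d s *
        (kurt_t M t a b c d - fisher_h M t a b * fisher_h M t c d))" for p q r s
  proof -
    have Ih: "Ihat ys p q = (1 / real N) * (\<Sum>i<N. sc p (ys i) * sc q (ys i))" for ys p q
      unfolding Ihat_def emp_fisher_def score_sc ..
    have "covar S (\<lambda>ys. Ihat ys p q) (\<lambda>ys. Ihat ys r s) =
        (1 / real N) * ((\<integral>y. (sc p y * sc q y) * (sc r y * sc s y) \<partial>M) - (\<integral>y. sc p y * sc q y \<partial>M) * (\<integral>y. sc r y * sc s y \<partial>M))"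
      unfolding Ih S_def by (rule cov_iid[OF probM Isc2 Isc2 Isc4 assms(6)])
    also have "(\<integral>y. (sc p y * sc q y) * (sc r y * sc s y) \<partial>M) - (\<integral>y. sc p y * sc q y \<partial>M) * (\<integral>y. sc r y * sc s y \<partial>M)
      = (\<Sum>a<n L. \<Sum>b<n L. \<Sum>c<n L. \<Sum>d<n L. J a p * J b q * J c r * J d s *
        ((\<integral>y. X a y * X b y * X c y * X d y \<partial>M) - (\<integral>y. X a y * X b y \<partial>M) * (\<integral>y. X c y * X d y \<partial>M)))"
      unfolding sc_def by (rule moment_expand) (auto intro: I4 I2)
    also have "\<dots> = (\<Sum>a<n L. \<Sum>b<n L. \<Sum>c<n L. \<Sum>d<n L. J a p * J b q * J c r * J d s *
        (kurt_t M t a b c d - fisher_h M t a b * fisher_h M t c d))"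
      by (simp add: kurt_t_def fisher_h_def X_def \<eta>_def)
    finally show ?thesis .
  qed
  have finP: "finite P"
  proof -
    define K where "K = Max (n ` {..L})"
    have nK: "n l \<le> K" if "l \<le> L" for l
      unfolding K_def using that by (intro Max_ge) auto
    have "P \<subseteq> {..<L} \<times> {..<K} \<times> {..K}"
    proof
      fix z assume "z \<in> P"
      then obtain l i j where z: "z = (l, i, j)" "l < L" "i < n (Suc l)" "j \<le> n l"
        unfolding P_def param_idx_def by auto
      have "n (Suc l) \<le> K" "n l \<le> K" using z(2) by (auto intro: nK)
      then show "z \<in> {..<L} \<times> {..<K} \<times> {..K}" using z by auto
    qed
    then show ?thesis by (rule finite_subset) auto
  qed
  show ?thesis
    unfolding Let_def P_def[symmetric] M_def[symmetric] S_def[symmetric] Ihat_def[symmetric] J_def[symmetric] cov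
    by (rule final_ineq[OF finP]) simp
qed


end
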